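(* Let $\mathcal{B}$ be a Boolean control network. If $\mathcal{B}$ is online observable, then $\mathcal{B}$ satisfies Type-I observability.
   Context: $\mathbb{B}=\{0,1\}$. A BCN has inputs $\mathcal{I}=\mathbb{B}^\ell$, states $\mathcal{S}=\mathbb{B}^m$, outputs $\mathcal{O}=\mathbb{B}^n$ and updating rules $\sigma:\mathcal{I}\times\mathcal{S}\to\mathcal{S}$, $\rho:\mathcal{S}\to\mathcal{O}$, with $\mathsf{s}(t+1)=\sigma(\mathsf{i}(t),\mathsf{s}(t))$, $\mathsf{o}(t)=\rho(\mathsf{s}(t))$. For a state $\mathsf{s}$ and input sequence $\mathsf{I}=\mathsf{i}(0)\ldots\mathsf{i}(t)$, $H^{[0,t]}(\mathsf{s},\mathsf{I})=\mathsf{o}(0)\ldots\mathsf{o}(t+1)$ is the output sequence of the run with $\mathsf{s}(0)=\mathsf{s}$. Type-I observability: for every state $\mathsf{s}$ there exists an input sequence $\mathsf{I}=\mathsf{i}(0)\ldots\mathsf{i}(t)$ such that $H^{[0,t]}(\mathsf{s}',\mathsf{I})\ne H^{[0,t]}(\mathsf{s},\mathsf{I})$ for all states $\mathsf{s}'\ne\mathsf{s}$. Online observability: with $\varepsilon$ denoting empty input/output, let $\xi(\mathsf{i},\mathsf{s})=\sigma(\mathsf{i},\mathsf{s})$ for $\mathsf{i}\ne\varepsilon$, $\xi(\varepsilon,\mathsf{s})=\mathsf{s}$; for $\mathsf{S}\subseteq\mathcal{S}$, $\zeta(\mathsf{S},\mathsf{i},\mathsf{o})=\{\xi(\mathsf{i},\mathsf{s}):\mathsf{s}\in\mathsf{S},\rho(\xi(\mathsf{i},\mathsf{s}))=\mathsf{o}\}$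 if $\mathsf{o}\ne\varepsilon$ and $\zeta(\mathsf{S},\mathsf{i},\varepsilon)=\{\xi(\mathsf{i},\mathsf{s}):\mathsf{s}\in\mathsf{S}\}$. For nonempty $\mathsf{S}$: $P_0(\mathsf{S})$ iff $|\mathsf{S}|=1$; $P_{n+1}(\mathsf{S})$ iff $|\mathsf{S}|=1$ or there is $\mathsf{i}\in\mathcal{I}$ with $|\zeta(\mathsf{S},\mathsf{i},\varepsilon)|=|\mathsf{S}|$ such that every nonempty $\zeta(\mathsf{S},\mathsf{i},\mathsf{o})$, $\mathsf{o}\in\mathcal{O}$, satisfies $P_n$. $\Gamma(\mathsf{S})$ is the least $n$ with $P_n(\mathsf{S})$, or $\infty$ if none. The BCN is online observable if $\Gamma(\zeta(\mathcal{S},\varepsilon,\mathsf{o}))\ne\infty$ for every $\mathsf{o}\in\mathcal{O}$ with $\zeta(\mathcal{S},\varepsilon,\mathsf{o})\ne\emptyset$. *)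

theory Defs
  imports "HOL-Analysis.Finite_Cartesian_Product" "HOL-Library.Extended_Nat"
begin

text \<open>A Boolean control network (BCN) is given by its updating rules
  sigma :: input => state => state and rho :: state => output, where
  inputs are bool^'l, states bool^'m, outputs bool^'n.\<close>

fun state_seq :: "('i \<Rightarrow> 's \<Rightarrow> 's) \<Rightarrow> 's \<Rightarrow> 'i list \<Rightarrow> 's list" where
  "state_seq \<sigma> s [] = [s]"
| "state_seq \<sigma> s (i # is) = s # state_seq \<sigma> (\<sigma> i s) is"

definition H :: "('i \<Rightarrow> 's \<Rightarrow> 's) \<Rightarrow> ('s \<Rightarrow> 'o) \<Rightarrow> 's \<Rightarrow> 'i list \<Rightarrow> 'o list" where
  "H \<sigma> \<rho> s I = map \<rho> (state_seq \<sigma> s I)"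

definition typeI_observable :: "('i \<Rightarrow> 's \<Rightarrow> 's) \<Rightarrow> ('s \<Rightarrow> 'o) \<Rightarrow> bool" where
  "typeI_observable \<sigma> \<rho> \<longleftrightarrow>
     (\<forall>s. \<exists>I. I \<noteq> [] \<and> (\<forall>s'. s' \<noteq> s \<longrightarrow> H \<sigma> \<rho> s' I \<noteq> H \<sigma> \<rho> s I))"

text \<open>The empty input/output epsilon is modelled by None.\<close>
definition xi :: "('i \<Rightarrow> 's \<Rightarrow> 's) \<Rightarrow> 'i option \<Rightarrow> 's \<Rightarrow> 's" where
  "xi \<sigma> i s = (case i of None \<Rightarrow> s | Some i' \<Rightarrow> \<sigma> i' s)"

definition zeta :: "('i \<Rightarrow> 's \<Rightarrow> 's) \<Rightarrow> ('s \<Rightarrow> 'o) \<Rightarrow> 's set \<Rightarrow> 'i option \<Rightarrow> 'o option \<Rightarrow> 's set" where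
  "zeta \<sigma> \<rho> S i ob = (case ob of
       None \<Rightarrow> {xi \<sigma> i s | s. s \<in> S}
     | Some o' \<Rightarrow> {xi \<sigma> i s | s. s \<in> S \<and> \<rho> (xi \<sigma> i s) = o'})"

fun P :: "('i \<Rightarrow> 's \<Rightarrow> 's) \<Rightarrow> ('s \<Rightarrow> 'o) \<Rightarrow> nat \<Rightarrow> 's set \<Rightarrow> bool" where
  "P \<sigma> \<rho> 0 S \<longleftrightarrow> card S = 1"
| "P \<sigma> \<rho> (Suc n) S \<longleftrightarrow> card S = 1 \<or>
     (\<exists>i. card (zeta \<sigma> \<rho> S (Some i) None) = card S \<and>
          (\<forall>ob. zeta \<sigma> \<rho> S (Some i) (Some ob) \<noteq> {} \<longrightarrow> P \<sigma> \<rho> n (zeta \<sigma> \<rho> S (Some i) (Some ob))))"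

definition Gamma :: "('i \<Rightarrow> 's \<Rightarrow> 's) \<Rightarrow> ('s \<Rightarrow> 'o) \<Rightarrow> 's set \<Rightarrow> enat" where
  "Gamma \<sigma> \<rho> S = (if \<exists>n. P \<sigma> \<rho> n S then enat (LEAST n. P \<sigma> \<rho> n S) else \<infinity>)"

definition online_observable :: "('i \<Rightarrow> 's \<Rightarrow> 's) \<Rightarrow> ('s \<Rightarrow> 'o) \<Rightarrow> bool" where
  "online_observable \<sigma> \<rho> \<longleftrightarrow>
     (\<forall>ob. zeta \<sigma> \<rho> UNIV None (Some ob) \<noteq> {} \<longrightarrow> Gamma \<sigma> \<rho> (zeta \<sigma> \<rho> UNIV None (Some ob)) \<noteq> \<infinity>)"

end

theory Submission
  imports Defs
begin

lemma H_Cons: "H \<sigma> \<rho> s (i # I) = \<rho> s # H \<sigma> \<rho> (\<sigma> i s) I"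
  by (simp add: H_def)

lemma H_hd: "\<exists>r. H \<sigma> \<rho> s I = \<rho> s # r"
  by (cases I) (auto simp: H_def)

lemma P_Q:
  "P \<sigma> \<rho> n S \<Longrightarrow> finite S \<Longrightarrow> s \<in> S \<Longrightarrow>
    \<exists>I. \<forall>s'\<in>S. s' \<noteq> s \<longrightarrow> H \<sigma> \<rho> s' I \<noteq> H \<sigma> \<rho> s I"
proof (induction n arbitrary: S s)
  case 0
  from 0(1) have "card S = 1" by simp
  then obtain x where x: "S = {x}" by (rule card_1_singletonE)
  with 0(3) have "S = {s}" by simp
  then show ?case by (intro exI[of _ "[]"]) simp
next
  case (Suc n)
  show ?case
  proof (cases "card S = 1")
    case True
    then obtain x where x: "S = {x}" by (rule card_1_singletonE)
    with Suc.prems(3) have "S = {s}" by simp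
    then show ?thesis by (intro exI[of _ "[]"]) simp
  next
    case False
    have fin: "finite S" using Suc.prems(2) .
    from False Suc.prems(1) obtain i where
      ci: "card (zeta \<sigma> \<rho> S (Some i) None) = card S" and
      rec: "\<forall>ob. zeta \<sigma> \<rho> S (Some i) (Some ob) \<noteq> {} \<longrightarrow> P \<sigma> \<rho> n (zeta \<sigma> \<rho> S (Some i) (Some ob))"
      by auto
    have z1: "zeta \<sigma> \<rho> S (Some i) None = \<sigma> i ` S"
      by (auto simp: zeta_def xi_def)
    have inj: "inj_on (\<sigma> i) S"
      using ci z1 fin by (metis eq_card_imp_inj_on)
    define S' where "S' = zeta \<sigma> \<rho> S (Some i) (Some (\<rho> (\<sigma> i s)))"
    have S'eq: "S' = {\<sigma> i x | x. x \<in> S \<and> \<rho> (\<sigma> i x) = \<rho> (\<sigma> i s)}"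
      by (simp add: S'_def zeta_def xi_def)
    have sS': "\<sigma> i s \<in> S'" using S'eq Suc.prems(3) by auto
    have finS': "finite S'" using S'eq fin by simp
    have ne: "S' \<noteq> {}" using sS' by blast
    have "P \<sigma> \<rho> n S'" using rec ne unfolding S'_def by blast
    from Suc.IH[OF this finS' sS'] obtain I where
      I: "\<forall>s'\<in>S'. s' \<noteq> \<sigma> i s \<longrightarrow> H \<sigma> \<rho> s' I \<noteq> H \<sigma> \<rho> (\<sigma> i s) I" by blast
    have "\<forall>s'\<in>S. s' \<noteq> s \<longrightarrow> H \<sigma> \<rho> s' (i # I) \<noteq> H \<sigma> \<rho> s (i # I)"
    proof (intro ballI impI)
      fix s' assume s': "s' \<in> S" "s' \<noteq> s"
      show "H \<sigma> \<rho> s' (i # I) \<noteq> H \<sigma> \<rho> s (i # I)"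
      proof (cases "\<rho> (\<sigma> i s') = \<rho> (\<sigma> i s)")
        case True
        then have "\<sigma> i s' \<in> S'" using S'eq s' by auto
        moreover have "\<sigma> i s' \<noteq> \<sigma> i s" using inj s' Suc.prems(3) by (meson inj_on_def)
        ultimately show ?thesis using I by (simp add: H_Cons)
      next
        case False
        obtain r1 where r1: "H \<sigma> \<rho> (\<sigma> i s') I = \<rho> (\<sigma> i s') # r1" using H_hd[of \<sigma> \<rho> "\<sigma> i s'" I] by blast
        obtain r2 where r2: "H \<sigma> \<rho> (\<sigma> i s) I = \<rho> (\<sigma> i s) # r2" using H_hd[of \<sigma> \<rho> "\<sigma> i s" I] by blast
        show ?thesis using False r1 r2 by (simp add: H_Cons)
      qed
    qed
    then show ?thesis by blast
  qed
qed

theorem lemma3: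
  fixes \<sigma> :: "bool^'l \<Rightarrow> bool^'m \<Rightarrow> bool^'m" and \<rho> :: "bool^'m \<Rightarrow> bool^'n"
  assumes "online_observable \<sigma> \<rho>"
  shows "typeI_observable \<sigma> \<rho>"
  unfolding typeI_observable_def
proof
  fix s
  define S where "S = zeta \<sigma> \<rho> UNIV None (Some (\<rho> s))"
  have Seq: "S = {x. \<rho> x = \<rho> s}" by (auto simp: S_def zeta_def xi_def)
  have "S \<noteq> {}" using Seq by auto
  then have "Gamma \<sigma> \<rho> S \<noteq> \<infinity>" using assms S_def by (simp add: online_observable_def)
  then obtain n where Pn: "P \<sigma> \<rho> n S" unfolding Gamma_def by (cases "\<exists>n. P \<sigma> \<rho> n S") auto
  have finS: "finite S" by simp
  have sS: "s \<in> S" using Seq by simp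
  from P_Q[OF Pn finS sS] obtain I where
    I: "\<forall>s'\<in>S. s' \<noteq> s \<longrightarrow> H \<sigma> \<rho> s' I \<noteq> H \<sigma> \<rho> s I" by blast
  have diff: "\<forall>s'. s' \<noteq> s \<longrightarrow> H \<sigma> \<rho> s' I \<noteq> H \<sigma> \<rho> s I"
  proof (intro allI impI)
    fix s' assume "s' \<noteq> s"
    show "H \<sigma> \<rho> s' I \<noteq> H \<sigma> \<rho> s I"
    proof (cases "\<rho> s' = \<rho> s")
      case True then show ?thesis using I Seq \<open>s' \<noteq> s\<close> by auto
    next
      case False then show ?thesis using H_hd[of \<sigma> \<rho> s' I] H_hd[of \<sigma> \<rho> s I] by auto
    qed
  qed
  show "\<exists>I. I \<noteq> [] \<and> (\<forall>s'. s' \<noteq> s \<longrightarrow> H \<sigma> \<rho> s' I \<noteq> H \<sigma> \<rho> s I)"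
  proof (cases "I = []")
    case False then show ?thesis using diff by blast
  next
    case True
    have "\<forall>s'. s' \<noteq> s \<longrightarrow> H \<sigma> \<rho> s' [undefined] \<noteq> H \<sigma> \<rho> s [undefined]"
      using diff True by (auto simp: H_def)
    then show ?thesis by blast
  qed
qed

end
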